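(* Let $A\in\mathbb{R}^{n\times n}$ be monotone and let $A=P_1-R_1+S_1=P_2-R_2+S_2$ be two double weak regular splittings of $A$. Suppose $A=P_3-R_3+S_3$ is a double regular splitting with $1\notin\sigma(S_3P_i^{-1})$ and $\widehat{A}_i^{-1}\geq 0$ for $i=1,2$, where $\widehat{A}_i=(I-S_3P_i^{-1})A$. Let $\widehat{P}_i=P_3$ and $\widehat{R}_i=R_3-S_3P_i^{-1}R_i$. If $\widehat{P}_1^{-1}\widehat{A}_1\geq\widehat{P}_2^{-1}\widehat{A}_2$ and $\widehat{P}_1^{-1}\widehat{R}_1\geq\widehat{P}_2^{-1}\widehat{R}_2$, then $\rho(W_{13})\leq\rho(W_{23})<1$, where for $i=1,2$ $$W_{i3}=\begin{pmatrix} P_3^{-1}R_3-P_3^{-1}S_3P_i^{-1}R_i & P_3^{-1}S_3P_i^{-1}S_i\\ I & 0\end{pmatrix}.$$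
   Context: Inequalities are entrywise; $\rho$ is the spectral radius, $\sigma$ the spectrum. $A$ is monotone if $A$ is nonsingular and $A^{-1}\geq 0$. A double splitting $A=P-R+S$ with $P$ nonsingular is a double regular splitting if $P^{-1}\geq0$, $R\geq0$, $S\leq0$, and a double weak regular splitting if $P^{-1}\geq 0$, $P^{-1}R\geq0$, $P^{-1}S\leq0$. *)

theory Defs
  imports "Jordan_Normal_Form.Spectral_Radius" "Jordan_Normal_Form.Gauss_Jordan_Elimination"
begin

definition minv :: "real mat \<Rightarrow> real mat" where
  "minv A = the (mat_inverse A)"

definition mat_le :: "real mat \<Rightarrow> real mat \<Rightarrow> bool" where
  "mat_le A B \<longleftrightarrow> dim_row A = dim_row B \<and> dim_col A = dim_col B \<and>
     (\<forall>i < dim_row A. \<forall>j < dim_col A. A $$ (i,j) \<le> B $$ (i,j))"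

definition nonneg_mat :: "real mat \<Rightarrow> bool" where
  "nonneg_mat A \<longleftrightarrow> (\<forall>i < dim_row A. \<forall>j < dim_col A. 0 \<le> A $$ (i,j))"

definition nonpos_mat :: "real mat \<Rightarrow> bool" where
  "nonpos_mat A \<longleftrightarrow> (\<forall>i < dim_row A. \<forall>j < dim_col A. A $$ (i,j) \<le> 0)"

definition rspectrum :: "real mat \<Rightarrow> complex set" where
  "rspectrum A = spectrum (map_mat complex_of_real A)"

definition rho :: "real mat \<Rightarrow> real" where
  "rho A = spectral_radius (map_mat complex_of_real A)"

definition monotone_mat :: "real mat \<Rightarrow> bool" where
  "monotone_mat A \<longleftrightarrow> invertible_mat A \<and> nonneg_mat (minv A)"

definition double_splitting :: "nat \<Rightarrow> real mat \<Rightarrow> real mat \<Rightarrow> real mat \<Rightarrow> real mat \<Rightarrow> bool" where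
  "double_splitting n A P R S \<longleftrightarrow>
     A \<in> carrier_mat n n \<and> P \<in> carrier_mat n n \<and> R \<in> carrier_mat n n \<and> S \<in> carrier_mat n n \<and>
     invertible_mat P \<and> A = P - R + S"

definition double_regular_splitting :: "nat \<Rightarrow> real mat \<Rightarrow> real mat \<Rightarrow> real mat \<Rightarrow> real mat \<Rightarrow> bool" where
  "double_regular_splitting n A P R S \<longleftrightarrow>
     double_splitting n A P R S \<and> nonneg_mat (minv P) \<and> nonneg_mat R \<and> nonpos_mat S"

definition double_weak_regular_splitting :: "nat \<Rightarrow> real mat \<Rightarrow> real mat \<Rightarrow> real mat \<Rightarrow> real mat \<Rightarrow> bool" where
  "double_weak_regular_splitting n A P R S \<longleftrightarrow>
     double_splitting n A P R S \<and> nonneg_mat (minv P) \<and> nonneg_mat (minv P * R) \<and> nonpos_mat (minv P * S)"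

definition W_mat :: "nat \<Rightarrow> real mat \<Rightarrow> real mat \<Rightarrow> real mat \<Rightarrow> real mat \<Rightarrow> real mat \<Rightarrow> real mat \<Rightarrow> real mat" where
  "W_mat n P3 R3 S3 Pk Rk Sk =
     four_block_mat (minv P3 * R3 - minv P3 * S3 * minv Pk * Rk) (minv P3 * S3 * minv Pk * Sk)
                    (1\<^sub>m n) (0\<^sub>m n n)"

end

theory Submission
  imports Defs
begin


lemma mult_idx: assumes "A \<in> carrier_mat nr n" "B \<in> carrier_mat n nc" "i < nr" "j < nc"
  shows "(A * B) $$ (i,j) = (\<Sum>k\<in>{0..<n}. A $$ (i,k) * B $$ (k,j))"
  using assms by (simp add: scalar_prod_def)

lemma mv_idx: assumes "A \<in> carrier_mat nr n" "v \<in> carrier_vec n" "i < nr"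
  shows "(A *\<^sub>v v) $ i = (\<Sum>k\<in>{0..<n}. A $$ (i,k) * v $ k)"
  using assms by (simp add: scalar_prod_def)

lemma minv_unit: assumes P: "P \<in> carrier_mat n n" and u: "P \<in> Units (ring_mat TYPE(real) n b)"
  shows "P * minv P = 1\<^sub>m n \<and> minv P * P = 1\<^sub>m n \<and> minv P \<in> carrier_mat n n"
proof -
  have "mat_inverse P \<noteq> None"
  proof
    assume "mat_inverse P = None"
    from mat_inverse(1)[OF P this, where b=b] u show False by simp
  qed
  then obtain B where "mat_inverse P = Some B" by auto
  with mat_inverse(2)[OF P this] show ?thesis unfolding minv_def by auto
qed

lemma invertible_unit: assumes P: "P \<in> carrier_mat n n" and inv: "invertible_mat P"
  shows "P \<in> Units (ring_mat TYPE(real) n b)"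
proof -
  from inv obtain B where 1: "P * B = 1\<^sub>m (dim_row P)" and 2: "B * P = 1\<^sub>m (dim_row B)"
    unfolding invertible_mat_def inverts_mat_def by auto
  have "dim_row B = n" using 2 P by (metis carrier_matD(2) index_mult_mat(3) index_one_mat(3))
  moreover have "dim_col B = n" using 1 P by (metis carrier_matD(1) index_mult_mat(3) index_one_mat(3))
  ultimately have B: "B \<in> carrier_mat n n" by auto
  show ?thesis unfolding Units_def ring_mat_simps using P B 1 2 by auto
qed

lemma minv_inv: assumes P: "P \<in> carrier_mat n n" and inv: "invertible_mat P"
  shows "P * minv P = 1\<^sub>m n \<and> minv P * P = 1\<^sub>m n \<and> minv P \<in> carrier_mat n n"
  using minv_unit[OF P invertible_unit[OF P inv]] .

lemma pow_smult: fixes A :: "real mat" assumes A: "A \<in> carrier_mat n n"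
  shows "(a \<cdot>\<^sub>m A) ^\<^sub>m k = (a ^ k) \<cdot>\<^sub>m (A ^\<^sub>m k)"
proof (induct k)
  case 0 then show ?case using A by (auto intro!: eq_matI)
next
  case (Suc k)
  have "(a \<cdot>\<^sub>m A) ^\<^sub>m Suc k = (a ^ k \<cdot>\<^sub>m A ^\<^sub>m k) * (a \<cdot>\<^sub>m A)" using Suc by simp
  also have "\<dots> = a ^ k \<cdot>\<^sub>m (A ^\<^sub>m k * (a \<cdot>\<^sub>m A))"
    using A by (intro mult_smult_assoc_mat[where nr=n and n=n and nc=n]) auto
  also have "\<dots> = a ^ k \<cdot>\<^sub>m (a \<cdot>\<^sub>m (A ^\<^sub>m k * A))"
    using A by (subst mult_smult_distrib[where nr=n and n=n and nc=n]) auto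
  also have "\<dots> = a ^ Suc k \<cdot>\<^sub>m (A ^\<^sub>m Suc k)"
    by (rule eq_matI) (auto simp: mult.commute mult.left_commute)
  finally show ?case .
qed

lemma pow_comm: assumes A: "A \<in> carrier_mat n n"
  shows "A * A ^\<^sub>m k = A ^\<^sub>m k * A"
proof (induct k)
  case 0 then show ?case using A by simp
next
  case (Suc k)
  have "A * A ^\<^sub>m Suc k = (A * A ^\<^sub>m k) * A" using A by (simp add: assoc_mult_mat[of _ n n _ n _ n])
  then show ?case using Suc by simp
qed



lemma ev_bound:
  fixes M :: "real mat" and x :: "real vec" and \<mu> :: complex
  assumes M: "M \<in> carrier_mat m m" and nn: "nonneg_mat M" and x: "x \<in> carrier_vec m"
    and xpos: "\<And>i. i < m \<Longrightarrow> x $ i > 0" and le: "\<And>i. i < m \<Longrightarrow> (M *\<^sub>v x) $ i \<le> \<beta> * x $ i"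
    and ev: "eigenvalue (map_mat complex_of_real M) \<mu>"
  shows "norm \<mu> \<le> \<beta>"
proof -
  let ?Mc = "map_mat complex_of_real M"
  have Mc: "?Mc \<in> carrier_mat m m" using M by simp
  from ev obtain v where v: "v \<in> carrier_vec m" "v \<noteq> 0\<^sub>v m" "?Mc *\<^sub>v v = \<mu> \<cdot>\<^sub>v v"
    unfolding eigenvalue_def eigenvector_def using M by auto
  obtain j where j: "j < m" "v $ j \<noteq> 0"
  proof -
    have "\<exists>j<m. v $ j \<noteq> 0"
    proof (rule ccontr)
      assume "\<not> ?thesis"
      then have "v = 0\<^sub>v m" using v(1) by (intro eq_vecI) auto
      with v(2) show False by simp
    qed
    then show ?thesis using that by blast
  qed
  define r where "r i = norm (v $ i) / x $ i" for i
  define t where "t = Max (r ` {..<m})"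
  have fin: "finite (r ` {..<m})" and ne: "r ` {..<m} \<noteq> {}" using j by auto
  obtain i0 where i0: "i0 < m" "r i0 = t" using Max_in[OF fin ne] unfolding t_def by auto
  have rle: "norm (v $ i) \<le> t * x $ i" if "i < m" for i
  proof -
    have "r i \<le> t" unfolding t_def using fin that by auto
    then show ?thesis unfolding r_def using xpos[OF that] by (simp add: divide_le_eq)
  qed
  have "r j > 0" unfolding r_def using j xpos[OF j(1)] by auto
  moreover have "r j \<le> t" unfolding t_def using fin j(1) by (intro Max_ge) auto
  ultimately have tpos: "t > 0" by linarith
  have vi0: "norm (v $ i0) = t * x $ i0" using i0 xpos[OF i0(1)] unfolding r_def by auto
  have "(?Mc *\<^sub>v v) $ i0 = \<mu> * v $ i0" using v(3) i0 v(1) by simp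
  then have eq: "\<mu> * v $ i0 = (\<Sum>k\<in>{0..<m}. complex_of_real (M $$ (i0,k)) * v $ k)"
    using mv_idx[OF Mc v(1) i0(1)] M i0 by simp
  have "norm \<mu> * norm (v $ i0) = norm (\<Sum>k\<in>{0..<m}. complex_of_real (M $$ (i0,k)) * v $ k)"
    using eq by (metis norm_mult)
  also have "\<dots> \<le> (\<Sum>k\<in>{0..<m}. norm (complex_of_real (M $$ (i0,k)) * v $ k))" by (rule norm_sum)
  also have "\<dots> = (\<Sum>k\<in>{0..<m}. M $$ (i0,k) * norm (v $ k))"
    using nn M i0 unfolding nonneg_mat_def by (intro sum.cong) (auto simp: norm_mult)
  also have "\<dots> \<le> (\<Sum>k\<in>{0..<m}. M $$ (i0,k) * (t * x $ k))"
    using nn M i0 rle unfolding nonneg_mat_def by (intro sum_mono mult_left_mono) auto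
  also have "\<dots> = t * (M *\<^sub>v x) $ i0"
    using mv_idx[OF M x i0(1)] by (simp add: sum_distrib_left mult_ac)
  also have "\<dots> \<le> t * (\<beta> * x $ i0)" using le[OF i0(1)] tpos by simp
  also have "\<dots> = \<beta> * norm (v $ i0)" using vi0 by simp
  finally have "norm \<mu> * norm (v $ i0) \<le> \<beta> * norm (v $ i0)" .
  moreover have "norm (v $ i0) > 0" using vi0 tpos xpos[OF i0(1)] by simp
  ultimately show ?thesis by simp
qed

lemma ev_bound_strict:
  fixes M :: "real mat" and x :: "real vec" and \<mu> :: complex
  assumes M: "M \<in> carrier_mat m m" and nn: "nonneg_mat M" and x: "x \<in> carrier_vec m"
    and xpos: "\<And>i. i < m \<Longrightarrow> x $ i > 0" and lt: "\<And>i. i < m \<Longrightarrow> (M *\<^sub>v x) $ i < x $ i"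
    and ev: "eigenvalue (map_mat complex_of_real M) \<mu>"
  shows "norm \<mu> < 1"
proof -
  have m: "m > 0" using eigenvalue_imp_nonzero_dim[OF _ ev] M by simp
  define q where "q i = (M *\<^sub>v x) $ i / x $ i" for i
  define \<beta> where "\<beta> = Max (q ` {..<m})"
  have fin: "finite (q ` {..<m})" and ne: "q ` {..<m} \<noteq> {}" using m by auto
  obtain i0 where i0: "i0 < m" "q i0 = \<beta>" using Max_in[OF fin ne] unfolding \<beta>_def by auto
  have "\<beta> < 1" using i0 lt[OF i0(1)] xpos[OF i0(1)] unfolding q_def by (auto simp: divide_less_eq)
  moreover have "norm \<mu> \<le> \<beta>"
  proof (rule ev_bound[OF M nn x xpos _ ev])
    fix i assume i: "i < m"
    have "q i \<le> \<beta>" unfolding \<beta>_def using fin i by auto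
    then show "(M *\<^sub>v x) $ i \<le> \<beta> * x $ i" unfolding q_def using xpos[OF i] by (simp add: divide_le_eq mult.commute)
  qed
  ultimately show ?thesis by simp
qed

lemma rho_le:
  fixes M :: "real mat"
  assumes M: "M \<in> carrier_mat m m" and m: "m > 0"
    and b: "\<And>\<mu>. eigenvalue (map_mat complex_of_real M) \<mu> \<Longrightarrow> norm \<mu> \<le> \<beta>"
  shows "rho M \<le> \<beta>"
proof -
  have Mc: "map_mat complex_of_real M \<in> carrier_mat m m" using M by simp
  from spectral_radius_mem_max(1)[OF Mc m] obtain \<mu> where
    "\<mu> \<in> spectrum (map_mat complex_of_real M)" "spectral_radius (map_mat complex_of_real M) = norm \<mu>" by auto
  then show ?thesis using b unfolding rho_def spectrum_def by auto
qed

lemma rho_lt: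
  fixes M :: "real mat"
  assumes M: "M \<in> carrier_mat m m" and m: "m > 0"
    and b: "\<And>\<mu>. eigenvalue (map_mat complex_of_real M) \<mu> \<Longrightarrow> norm \<mu> < \<beta>"
  shows "rho M < \<beta>"
proof -
  have Mc: "map_mat complex_of_real M \<in> carrier_mat m m" using M by simp
  from spectral_radius_mem_max(1)[OF Mc m] obtain \<mu> where
    "\<mu> \<in> spectrum (map_mat complex_of_real M)" "spectral_radius (map_mat complex_of_real M) = norm \<mu>" by auto
  then show ?thesis using b unfolding rho_def spectrum_def by auto
qed

lemma rho_ge:
  fixes M :: "real mat"
  assumes M: "M \<in> carrier_mat m m" and ev: "eigenvalue (map_mat complex_of_real M) \<mu>"
  shows "norm \<mu> \<le> rho M"
proof -
  have Mc: "map_mat complex_of_real M \<in> carrier_mat m m" using M by simp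
  have m: "m > 0" using eigenvalue_imp_nonzero_dim[OF Mc ev] by simp
  show ?thesis using spectral_radius_mem_max(2)[OF Mc m] ev unfolding rho_def spectrum_def by auto
qed

lemma rho_nonneg:
  fixes M :: "real mat"
  assumes M: "M \<in> carrier_mat m m" and m: "m > 0"
  shows "rho M \<ge> 0"
proof -
  have Mc: "map_mat complex_of_real M \<in> carrier_mat m m" using M by simp
  from spectral_radius_mem_max(1)[OF Mc m] show ?thesis unfolding rho_def by auto
qed



lemma nonneg_mult: assumes A: "A \<in> carrier_mat n k" and B: "B \<in> carrier_mat k m"
  and a: "nonneg_mat A" and b: "nonneg_mat B"
  shows "nonneg_mat (A * B)"
  unfolding nonneg_mat_def
proof (intro allI impI)
  fix i j assume i: "i < dim_row (A * B)" and j: "j < dim_col (A * B)"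
  then have i': "i < n" and j': "j < m" using A B by auto
  show "0 \<le> (A * B) $$ (i, j)" unfolding mult_idx[OF A B i' j']
    using a b A B i' j' unfolding nonneg_mat_def by (intro sum_nonneg mult_nonneg_nonneg) auto
qed

lemma nonneg_pow: assumes A: "A \<in> carrier_mat n n" and a: "nonneg_mat A"
  shows "nonneg_mat (A ^\<^sub>m k)"
proof (induct k)
  case 0 then show ?case by (auto simp: nonneg_mat_def)
next
  case (Suc k) then show ?case using nonneg_mult[OF pow_carrier_mat[OF A] A] a by simp
qed

lemma resolvent:
  fixes W :: "real mat"
  assumes W: "W \<in> carrier_mat m m" and m: "m > 0" and nn: "nonneg_mat W" and rb: "rho W < \<beta>"
  shows "\<exists>x \<in> carrier_vec m. (\<forall>i<m. x $ i > 0) \<and> (\<forall>i<m. (W *\<^sub>v x) $ i \<le> \<beta> * x $ i)"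
proof -
  define r where "r = rho W"
  have r0: "r \<ge> 0" unfolding r_def by (rule rho_nonneg[OF W m])
  define b where "b = (r + \<beta>) / 2"
  have b: "r < b" "b < \<beta>" "0 < b" using rb r0 unfolding b_def r_def by auto
  define Wc where "Wc = map_mat complex_of_real ((1 / b) \<cdot>\<^sub>m W)"
  have Wc: "Wc \<in> carrier_mat m m" using W unfolding Wc_def by simp
  have "spectral_radius Wc < 1"
  proof -
    from spectral_radius_mem_max(1)[OF Wc m] obtain \<mu> where
      mu: "\<mu> \<in> spectrum Wc" "spectral_radius Wc = norm \<mu>" by auto
    from mu(1) obtain v where v: "v \<in> carrier_vec m" "v \<noteq> 0\<^sub>v m" "Wc *\<^sub>v v = \<mu> \<cdot>\<^sub>v v"
      unfolding spectrum_def eigenvalue_def eigenvector_def using Wc by auto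
    let ?Mc = "map_mat complex_of_real W"
    have Mc: "?Mc \<in> carrier_mat m m" using W by simp
    have "?Mc *\<^sub>v v = (complex_of_real b * \<mu>) \<cdot>\<^sub>v v"
    proof (rule eq_vecI)
      fix i assume "i < dim_vec ((complex_of_real b * \<mu>) \<cdot>\<^sub>v v)"
      then have i: "i < m" using v by simp
      have "(Wc *\<^sub>v v) $ i = \<mu> * v $ i" using v i by simp
      moreover have "(Wc *\<^sub>v v) $ i = complex_of_real (1 / b) * (?Mc *\<^sub>v v) $ i"
        unfolding mv_idx[OF Wc v(1) i] mv_idx[OF Mc v(1) i] sum_distrib_left
        using W i unfolding Wc_def by (intro sum.cong) auto
      ultimately have "(?Mc *\<^sub>v v) $ i = complex_of_real b * (\<mu> * v $ i)"
        using b(3) by (auto simp: field_simps)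
      then show "(?Mc *\<^sub>v v) $ i = ((complex_of_real b * \<mu>) \<cdot>\<^sub>v v) $ i" using i v by simp
    qed (use v W in auto)
    then have "eigenvalue ?Mc (complex_of_real b * \<mu>)"
      unfolding eigenvalue_def eigenvector_def using v W by auto
    from rho_ge[OF W this] have "b * norm \<mu> \<le> r" unfolding r_def using b(3) by (simp add: norm_mult)
    then have "norm \<mu> < 1" using b by (smt (verit, best) mult_le_cancel_left1 norm_ge_zero)
    then show ?thesis using mu(2) by simp
  qed
  from spectral_radius_jnf_norm_bound_less_1_upper_triangular[OF Wc this]
  obtain c where c: "\<And>k. norm_bound (Wc ^\<^sub>m k) c" by auto
  have powb: "(W ^\<^sub>m k) $$ (i,j) \<le> c * b ^ k" if i: "i < m" and j: "j < m" for k i j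
  proof -
    have "Wc ^\<^sub>m k = map_mat complex_of_real (((1 / b) \<cdot>\<^sub>m W) ^\<^sub>m k)"
    proof -
      have "(1 / b) \<cdot>\<^sub>m W \<in> carrier_mat m m" using W by simp
      from of_real_hom.mat_hom_pow[OF this, of k] show ?thesis unfolding Wc_def by (rule sym)
    qed
    also have "\<dots> = map_mat complex_of_real ((1 / b) ^ k \<cdot>\<^sub>m W ^\<^sub>m k)" using pow_smult[OF W] by simp
    finally have eq: "Wc ^\<^sub>m k = map_mat complex_of_real ((1 / b) ^ k \<cdot>\<^sub>m W ^\<^sub>m k)" .
    from c[of k] i j Wc have "norm ((Wc ^\<^sub>m k) $$ (i,j)) \<le> c" unfolding norm_bound_def by auto
    moreover have "(Wc ^\<^sub>m k) $$ (i,j) = complex_of_real ((1 / b) ^ k * (W ^\<^sub>m k) $$ (i,j))"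
      unfolding eq using i j W by simp
    ultimately have "\<bar>(1 / b) ^ k * (W ^\<^sub>m k) $$ (i,j)\<bar> \<le> c" by (simp only: norm_of_real)
    then have "(1 / b) ^ k * (W ^\<^sub>m k) $$ (i,j) \<le> c" by simp
    then have "(W ^\<^sub>m k) $$ (i,j) / b ^ k \<le> c" by (simp add: power_one_over)
    then show ?thesis using b(3) by (simp add: divide_le_eq mult.commute)
  qed
  define s where "s k i = (\<Sum>j\<in>{0..<m}. (W ^\<^sub>m k) $$ (i,j))" for k i
  have s0: "s 0 i = 1" if "i < m" for i
  proof -
    have "s 0 i = (\<Sum>j\<in>{0..<m}. if i = j then 1 else 0)"
      unfolding s_def using that W by (intro sum.cong) auto
    then show ?thesis using that by simp
  qed
  have snn: "s k i \<ge> 0" if "i < m" for k i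
    unfolding s_def using nonneg_pow[OF W nn, of k] that W unfolding nonneg_mat_def by (intro sum_nonneg) auto
  have sb: "s k i \<le> m * (c * b ^ k)" if "i < m" for k i
  proof -
    have "s k i \<le> (\<Sum>j\<in>{0..<m}. c * b ^ k)" unfolding s_def using powb[OF that] by (intro sum_mono) auto
    then show ?thesis by simp
  qed
  have sS: "(\<Sum>l\<in>{0..<m}. W $$ (i,l) * s k l) = s (Suc k) i" if i: "i < m" for k i
  proof -
    have "(\<Sum>l\<in>{0..<m}. W $$ (i,l) * s k l) = (\<Sum>j\<in>{0..<m}. \<Sum>l\<in>{0..<m}. W $$ (i,l) * (W ^\<^sub>m k) $$ (l,j))"
      unfolding s_def sum_distrib_left by (rule sum.swap)
    also have "\<dots> = (\<Sum>j\<in>{0..<m}. (W * W ^\<^sub>m k) $$ (i,j))"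
      using mult_idx[OF W pow_carrier_mat[OF W] i] by (intro sum.cong) auto
    also have "\<dots> = s (Suc k) i" unfolding s_def pow_comm[OF W] by simp
    finally show ?thesis .
  qed
  define q where "q = b / \<beta>"
  have q: "0 < q" "q < 1" using b unfolding q_def by auto
  obtain N where N: "q ^ N < 1 / (m * (\<bar>c\<bar> + 1))"
    using real_arch_pow_inv[OF _ q(2), of "1 / (m * (\<bar>c\<bar> + 1))"] m by auto
  have tail: "s (Suc N) i / \<beta> ^ Suc N \<le> 1" if i: "i < m" for i
  proof -
    have "s (Suc N) i \<le> m * (\<bar>c\<bar> * b ^ Suc N)"
      using sb[OF i, of "Suc N"] b(3) by (smt (verit, best) mult_left_mono mult_right_mono of_nat_0_le_iff zero_le_power)
    also have "\<dots> = m * \<bar>c\<bar> * q ^ Suc N * \<beta> ^ Suc N" unfolding q_def using b by (simp add: power_divide)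
    also have "\<dots> \<le> \<beta> ^ Suc N"
    proof -
      have "q ^ Suc N \<le> q ^ N" using q by (simp add: power_le_imp_le_exp mult_le_cancel_right1 less_imp_le)
      then have "m * \<bar>c\<bar> * q ^ Suc N \<le> m * \<bar>c\<bar> * q ^ N" by (simp add: mult_left_mono)
      also have "\<dots> \<le> m * (\<bar>c\<bar> + 1) * q ^ N" using q
        by (intro mult_right_mono mult_left_mono) auto
      also have "\<dots> \<le> 1"
      proof -
        have pos: "real m * (\<bar>c\<bar> + 1) > 0" using m by (simp add: add_pos_nonneg)
        from N have "q ^ N * (real m * (\<bar>c\<bar> + 1)) < 1" using pos by (simp add: less_divide_eq)
        then show ?thesis by (simp add: mult_ac)
      qed
      finally show ?thesis using b by (simp add: mult_right_le_one_le)
    qed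
    finally show ?thesis using b by (simp add: divide_le_eq)
  qed
  define x where "x = vec m (\<lambda>i. \<Sum>k\<le>N. s k i / \<beta> ^ Suc k)"
  have x: "x \<in> carrier_vec m" unfolding x_def by simp
  have xpos: "x $ i > 0" if i: "i < m" for i
  proof -
    have "x $ i = s 0 i / \<beta> + (\<Sum>k<N. s (Suc k) i / \<beta> ^ Suc (Suc k))"
      unfolding x_def using i by (simp add: sum.atMost_shift)
    moreover have "(\<Sum>k<N. s (Suc k) i / \<beta> ^ Suc (Suc k)) \<ge> 0" using snn[OF i] b by (intro sum_nonneg) auto
    moreover have "1 / \<beta> > 0" using b by simp
    ultimately show ?thesis using s0[OF i] by (metis add_pos_nonneg)
  qed
  have "(W *\<^sub>v x) $ i \<le> \<beta> * x $ i" if i: "i < m" for i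
  proof -
    have "(W *\<^sub>v x) $ i = (\<Sum>l\<in>{0..<m}. W $$ (i,l) * x $ l)" by (rule mv_idx[OF W x i])
    also have "\<dots> = (\<Sum>l\<in>{0..<m}. W $$ (i,l) * (\<Sum>k\<le>N. s k l / \<beta> ^ Suc k))"
      unfolding x_def by (intro sum.cong) auto
    also have "\<dots> = (\<Sum>k\<le>N. (\<Sum>l\<in>{0..<m}. W $$ (i,l) * s k l) / \<beta> ^ Suc k)"
      unfolding sum_distrib_left sum_divide_distrib by (subst sum.swap) (simp add: mult_ac)
    also have "\<dots> = (\<Sum>k\<le>N. s (Suc k) i / \<beta> ^ Suc k)" using sS[OF i] by simp
    also have "\<dots> = (\<Sum>k\<le>Suc N. s k i / \<beta> ^ k) - s 0 i"
      by (subst sum.atMost_Suc_shift) simp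
    also have "\<dots> = (\<Sum>k\<le>N. s k i / \<beta> ^ k) + s (Suc N) i / \<beta> ^ Suc N - 1"
      using s0[OF i] by simp
    also have "\<dots> \<le> (\<Sum>k\<le>N. s k i / \<beta> ^ k)" using tail[OF i] by simp
    also have "\<dots> = \<beta> * x $ i"
      unfolding x_def using i b by (simp add: sum_distrib_left)
    finally show ?thesis .
  qed
  then show ?thesis using x xpos by blast
qed



declare minus_carrier_mat[simp]

lemma nonpos_mult1: assumes A: "A \<in> carrier_mat n k" and B: "B \<in> carrier_mat k m"
  and a: "nonneg_mat A" and b: "nonpos_mat B"
  shows "nonpos_mat (A * B)"
  unfolding nonpos_mat_def
proof (intro allI impI)
  fix i j assume i: "i < dim_row (A * B)" and j: "j < dim_col (A * B)"
  then have i': "i < n" and j': "j < m" using A B by auto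
  show "(A * B) $$ (i, j) \<le> 0" unfolding mult_idx[OF A B i' j']
    using a b A B i' j' unfolding nonneg_mat_def nonpos_mat_def by (intro sum_nonpos mult_nonneg_nonpos) auto
qed

lemma nonpos_mult2: assumes A: "A \<in> carrier_mat n k" and B: "B \<in> carrier_mat k m"
  and a: "nonpos_mat A" and b: "nonneg_mat B"
  shows "nonpos_mat (A * B)"
  unfolding nonpos_mat_def
proof (intro allI impI)
  fix i j assume i: "i < dim_row (A * B)" and j: "j < dim_col (A * B)"
  then have i': "i < n" and j': "j < m" using A B by auto
  show "(A * B) $$ (i, j) \<le> 0" unfolding mult_idx[OF A B i' j']
    using a b A B i' j' unfolding nonneg_mat_def nonpos_mat_def by (intro sum_nonpos mult_nonpos_nonneg) auto
qed

lemma nonneg_mult3: assumes A: "A \<in> carrier_mat n k" and B: "B \<in> carrier_mat k m"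
  and a: "nonpos_mat A" and b: "nonpos_mat B"
  shows "nonneg_mat (A * B)"
  unfolding nonneg_mat_def
proof (intro allI impI)
  fix i j assume i: "i < dim_row (A * B)" and j: "j < dim_col (A * B)"
  then have i': "i < n" and j': "j < m" using A B by auto
  show "0 \<le> (A * B) $$ (i, j)" unfolding mult_idx[OF A B i' j']
    using a b A B i' j' unfolding nonpos_mat_def by (intro sum_nonneg mult_nonpos_nonpos) auto
qed

lemma block_facts:
  fixes A P R S P3 R3 S3 :: "real mat"
  assumes sp: "double_weak_regular_splitting n A P R S" and sp3: "double_regular_splitting n A P3 R3 S3"
  shows "minv P3 * R3 - minv P3 * S3 * minv P * R \<in> carrier_mat n n"
    "minv P3 * S3 * minv P * S \<in> carrier_mat n n"
    "nonneg_mat (minv P3 * R3 - minv P3 * S3 * minv P * R)"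
    "nonneg_mat (minv P3 * S3 * minv P * S)"
    "minv P3 * ((1\<^sub>m n - S3 * minv P) * A) = 1\<^sub>m n - (minv P3 * R3 - minv P3 * S3 * minv P * R) - minv P3 * S3 * minv P * S"
    "minv P3 * (R3 - S3 * minv P * R) = minv P3 * R3 - minv P3 * S3 * minv P * R"
proof -
  from sp have cA: "A \<in> carrier_mat n n" and cP: "P \<in> carrier_mat n n" and cR: "R \<in> carrier_mat n n"
    and cS: "S \<in> carrier_mat n n" and iP: "invertible_mat P" and AP: "A = P - R + S"
    and nQ: "nonneg_mat (minv P)" and nK: "nonneg_mat (minv P * R)" and nL: "nonpos_mat (minv P * S)"
    unfolding double_weak_regular_splitting_def double_splitting_def by auto
  from sp3 have cP3: "P3 \<in> carrier_mat n n" and cR3: "R3 \<in> carrier_mat n n"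
    and cS3: "S3 \<in> carrier_mat n n" and iP3: "invertible_mat P3" and AP3: "A = P3 - R3 + S3"
    and nQ3: "nonneg_mat (minv P3)" and nR3: "nonneg_mat R3" and nS3: "nonpos_mat S3"
    unfolding double_regular_splitting_def double_splitting_def by auto
  define Q where "Q = minv P"
  define Q3 where "Q3 = minv P3"
  from minv_inv[OF cP iP] have PQ: "P * Q = 1\<^sub>m n" "Q * P = 1\<^sub>m n" and cQ: "Q \<in> carrier_mat n n"
    unfolding Q_def by auto
  from minv_inv[OF cP3 iP3] have PQ3: "P3 * Q3 = 1\<^sub>m n" "Q3 * P3 = 1\<^sub>m n" and cQ3: "Q3 \<in> carrier_mat n n"
    unfolding Q3_def by auto
  define X where "X = Q3 * S3"
  define K where "K = Q * R"
  define L where "L = Q * S"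
  have cX: "X \<in> carrier_mat n n" and cK: "K \<in> carrier_mat n n" and cL: "L \<in> carrier_mat n n"
    unfolding X_def K_def L_def using cQ3 cS3 cQ cR cS by auto
  have nX: "nonpos_mat X" unfolding X_def Q3_def using nonpos_mult1[OF _ cS3 nQ3 nS3] cQ3 Q3_def by simp
  have eqB: "Q3 * S3 * Q * R = X * K" unfolding X_def K_def using cQ3 cS3 cQ cR by (intro assoc_mult_mat[where n\<^sub>1=n and n\<^sub>2=n and n\<^sub>3=n and n\<^sub>4=n]) auto
  have eqC: "Q3 * S3 * Q * S = X * L" unfolding X_def L_def using cQ3 cS3 cQ cS by (intro assoc_mult_mat[where n\<^sub>1=n and n\<^sub>2=n and n\<^sub>3=n and n\<^sub>4=n]) auto
  have cQ3R3: "Q3 * R3 \<in> carrier_mat n n" using cQ3 cR3 by simp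
  have cXK: "X * K \<in> carrier_mat n n" and cXL: "X * L \<in> carrier_mat n n" using cX cK cL by auto
  show "minv P3 * R3 - minv P3 * S3 * minv P * R \<in> carrier_mat n n"
    "minv P3 * S3 * minv P * S \<in> carrier_mat n n"
    using eqB eqC cQ3R3 cXK cXL unfolding Q_def Q3_def by auto
  have nQ3R3: "nonneg_mat (Q3 * R3)" using nonneg_mult[OF cQ3 cR3] nQ3 nR3 Q3_def by simp
  have nXK: "nonpos_mat (X * K)" using nonpos_mult2[OF cX cK nX] nK K_def Q_def by simp
  have nXL: "nonneg_mat (X * L)" using nonneg_mult3[OF cX cL nX] nL L_def Q_def by simp
  show "nonneg_mat (minv P3 * R3 - minv P3 * S3 * minv P * R)"
    unfolding Q_def[symmetric] Q3_def[symmetric] eqB nonneg_mat_def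
  proof (intro allI impI)
    fix i j assume "i < dim_row (Q3 * R3 - X * K)" "j < dim_col (Q3 * R3 - X * K)"
    then have i: "i < n" and j: "j < n" using cXK by auto
    have "0 \<le> (Q3 * R3) $$ (i,j)" "(X * K) $$ (i,j) \<le> 0"
      using nQ3R3 nXK cQ3 cR3 cX cK i j unfolding nonneg_mat_def nonpos_mat_def by auto
    moreover have "(Q3 * R3 - X * K) $$ (i, j) = (Q3 * R3) $$ (i, j) - (X * K) $$ (i, j)"
      by (rule index_minus_mat) (use i j cX cK in auto)
    ultimately show "0 \<le> (Q3 * R3 - X * K) $$ (i, j)" by linarith
  qed
  show "nonneg_mat (minv P3 * S3 * minv P * S)"
    unfolding Q_def[symmetric] Q3_def[symmetric] eqC using nXL .
  have QA: "Q * A = 1\<^sub>m n - K + L"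
  proof -
    have "Q * A = Q * (P - R) + Q * S" unfolding AP using cQ cP cR cS
      by (subst mult_add_distrib_mat[where nr=n and n=n and nc=n]) auto
    also have "\<dots> = Q * P - Q * R + Q * S" using cQ cP cR
      by (subst mult_minus_distrib_mat[where nr=n and n=n and nc=n]) auto
    finally show ?thesis using PQ unfolding K_def L_def by simp
  qed
  have Q3A: "Q3 * A = 1\<^sub>m n - Q3 * R3 + X"
  proof -
    have "Q3 * A = Q3 * (P3 - R3) + Q3 * S3" unfolding AP3 using cQ3 cP3 cR3 cS3
      by (subst mult_add_distrib_mat[where nr=n and n=n and nc=n]) auto
    also have "\<dots> = Q3 * P3 - Q3 * R3 + Q3 * S3" using cQ3 cP3 cR3
      by (subst mult_minus_distrib_mat[where nr=n and n=n and nc=n]) auto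
    finally show ?thesis using PQ3 unfolding X_def by simp
  qed
  have "(1\<^sub>m n - S3 * Q) * A = A - S3 * (Q * A)"
  proof -
    have "(1\<^sub>m n - S3 * Q) * A = 1\<^sub>m n * A - (S3 * Q) * A" using cS3 cQ cA
      by (subst minus_mult_distrib_mat[where nr=n and n=n and nc=n]) auto
    then show ?thesis using cS3 cQ cA by simp
  qed
  then have "Q3 * ((1\<^sub>m n - S3 * Q) * A) = Q3 * A - Q3 * (S3 * (Q * A))"
    using cQ3 cS3 cQ cA by (simp add: mult_minus_distrib_mat[where nr=n and n=n and nc=n])
  also have "Q3 * (S3 * (Q * A)) = X * (Q * A)" unfolding X_def by (rule sym, rule assoc_mult_mat[where n\<^sub>1=n and n\<^sub>2=n and n\<^sub>3=n and n\<^sub>4=n]) (use cQ3 cS3 cQ cA in auto)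
  also have "X * (Q * A) = X - X * K + X * L"
  proof -
    have "X * (Q * A) = X * (1\<^sub>m n - K) + X * L" unfolding QA using cX cK cL
      by (subst mult_add_distrib_mat[where nr=n and n=n and nc=n]) auto
    also have "\<dots> = X * 1\<^sub>m n - X * K + X * L" using cX cK
      by (subst mult_minus_distrib_mat[where nr=n and n=n and nc=n]) auto
    finally show ?thesis using cX by simp
  qed
  finally have "Q3 * ((1\<^sub>m n - S3 * Q) * A) = 1\<^sub>m n - Q3 * R3 + X - (X - X * K + X * L)"
    unfolding Q3A .
  also have "\<dots> = 1\<^sub>m n - (Q3 * R3 - X * K) - X * L"
  proof -
    obtain XK XL QR where d: "XK = X * K" "XL = X * L" "QR = Q3 * R3" by auto
    have c: "XK \<in> carrier_mat n n" "XL \<in> carrier_mat n n" "QR \<in> carrier_mat n n"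
      using d cXK cXL cQ3R3 by auto
    have "1\<^sub>m n - QR + X - (X - XK + XL) = 1\<^sub>m n - (QR - XK) - XL"
      by (rule eq_matI) (use c cX in \<open>simp_all\<close>)
    then show ?thesis unfolding d .
  qed
  finally show "minv P3 * ((1\<^sub>m n - S3 * minv P) * A) = 1\<^sub>m n - (minv P3 * R3 - minv P3 * S3 * minv P * R) - minv P3 * S3 * minv P * S"
    unfolding Q_def[symmetric] Q3_def[symmetric] eqB eqC .
  have "Q3 * (R3 - S3 * Q * R) = Q3 * R3 - Q3 * (S3 * Q * R)" using cQ3 cR3 cS3 cQ cR
    by (subst mult_minus_distrib_mat[where nr=n and n=n and nc=n]) auto
  also have "Q3 * (S3 * Q * R) = X * K"
  proof -
    have "S3 * Q * R = S3 * (Q * R)" using cS3 cQ cR by (intro assoc_mult_mat[where n\<^sub>1=n and n\<^sub>2=n and n\<^sub>3=n and n\<^sub>4=n]) auto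
    then have "Q3 * (S3 * Q * R) = Q3 * (S3 * (Q * R))" by simp
    also have "\<dots> = Q3 * S3 * (Q * R)" by (rule sym, rule assoc_mult_mat[where n\<^sub>1=n and n\<^sub>2=n and n\<^sub>3=n and n\<^sub>4=n]) (use cQ3 cS3 cQ cR in auto)
    finally show ?thesis unfolding X_def K_def .
  qed
  finally show "minv P3 * (R3 - S3 * minv P * R) = minv P3 * R3 - minv P3 * S3 * minv P * R"
    unfolding Q_def[symmetric] Q3_def[symmetric] eqB .
qed



lemma det_I_minus: fixes M :: "real mat"
  assumes M: "M \<in> carrier_mat n n" and sp: "1 \<notin> rspectrum M"
  shows "det (1\<^sub>m n - M) \<noteq> 0"
proof
  assume "det (1\<^sub>m n - M) = 0"
  from this[unfolded det_0_iff_vec_prod_zero[of "1\<^sub>m n - M" n, OF minus_carrier_mat[OF M]]]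
  obtain v where v: "v \<in> carrier_vec n" "v \<noteq> 0\<^sub>v n" "(1\<^sub>m n - M) *\<^sub>v v = 0\<^sub>v n" by auto
  have Mv: "M *\<^sub>v v = v"
  proof (rule eq_vecI)
    fix i assume "i < dim_vec v"
    then have i: "i < n" using v by simp
    have "((1\<^sub>m n - M) *\<^sub>v v) $ i = 0" using v(3) i by simp
    moreover have "((1\<^sub>m n - M) *\<^sub>v v) $ i = v $ i - (M *\<^sub>v v) $ i"
      using minus_mult_distrib_mat_vec[OF one_carrier_mat M v(1)] v i M by simp
    ultimately show "(M *\<^sub>v v) $ i = v $ i" by simp
  qed (use v M in auto)
  define w where "w = map_vec complex_of_real v"
  have w: "w \<in> carrier_vec n" using v unfolding w_def by simp
  have "w \<noteq> 0\<^sub>v n"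
  proof
    assume "w = 0\<^sub>v n"
    then have "v = 0\<^sub>v n" unfolding w_def using v by (intro eq_vecI) (auto dest!: arg_cong[of _ _ "\<lambda>x. x $ _"] simp: vec_eq_iff)
    with v show False by simp
  qed
  moreover have "map_mat complex_of_real M *\<^sub>v w = 1 \<cdot>\<^sub>v w"
  proof -
    have "map_vec complex_of_real (M *\<^sub>v v) = map_mat complex_of_real M *\<^sub>v w"
      unfolding w_def by (rule of_real_hom.mult_mat_vec_hom[OF M v(1)])
    then have "w = map_mat complex_of_real M *\<^sub>v w" unfolding Mv w_def .
    then have "map_mat complex_of_real M *\<^sub>v w = w" by (rule sym)
    then show ?thesis by simp
  qed
  ultimately have "eigenvalue (map_mat complex_of_real M) 1"
    unfolding eigenvalue_def eigenvector_def using w M by auto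
  with sp show False unfolding rspectrum_def spectrum_def by simp
qed

lemma Ahat_unit: fixes M A :: "real mat"
  assumes A: "A \<in> carrier_mat n n" and iA: "invertible_mat A" and M: "M \<in> carrier_mat n n"
    and sp: "1 \<notin> rspectrum M"
  shows "(1\<^sub>m n - M) * A \<in> Units (ring_mat TYPE(real) n b)"
proof -
  from minv_inv[OF A iA] have "A * minv A = 1\<^sub>m n" and cA': "minv A \<in> carrier_mat n n" by auto
  from arg_cong[OF this(1), of det] det_mult[OF A cA'] have "det A * det (minv A) = 1" by simp
  then have dA: "det A \<noteq> 0" by auto
  have "det ((1\<^sub>m n - M) * A) = det (1\<^sub>m n - M) * det A"
    by (rule det_mult[OF minus_carrier_mat[OF M] A])
  then have d: "det ((1\<^sub>m n - M) * A) \<noteq> 0" using det_I_minus[OF M sp] dA by simp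
  show ?thesis by (rule det_non_zero_imp_unit[OF mult_carrier_mat[OF minus_carrier_mat[OF M] A] d])
qed

lemma pos_rowsum: fixes N M :: "real mat"
  assumes N: "N \<in> carrier_mat n n" and M: "M \<in> carrier_mat n n" and nn: "nonneg_mat N"
    and NM: "N * M = 1\<^sub>m n" and i: "i < n"
  shows "(N *\<^sub>v vec n (\<lambda>_. 1)) $ i > 0"
proof -
  have "(N * M) $$ (i,i) = 1" using NM i by simp
  then have s: "(\<Sum>k\<in>{0..<n}. N $$ (i,k) * M $$ (k,i)) = 1" using mult_idx[OF N M i i] by simp
  have "\<exists>k<n. N $$ (i,k) \<noteq> 0"
  proof (rule ccontr)
    assume "\<not> ?thesis"
    then have "(\<Sum>k\<in>{0..<n}. N $$ (i,k) * M $$ (k,i)) = 0" by (intro sum.neutral) auto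
    with s show False by simp
  qed
  then obtain k where k: "k < n" "N $$ (i,k) \<noteq> 0" by auto
  have nk: "N $$ (i,k) > 0" using nn k i N unfolding nonneg_mat_def by force
  have "(N *\<^sub>v vec n (\<lambda>_. 1)) $ i = (\<Sum>j\<in>{0..<n}. N $$ (i,j))"
    using mv_idx[OF N _ i, of "vec n (\<lambda>_. 1)"] by simp
  also have "\<dots> \<ge> N $$ (i,k)"
    using nn i N k unfolding nonneg_mat_def by (intro member_le_sum) auto
  finally show ?thesis using nk by simp
qed

lemma mv_mono: fixes M :: "real mat"
  assumes M: "M \<in> carrier_mat nr nc" and nn: "nonneg_mat M" and y: "y \<in> carrier_vec nc" and z: "z \<in> carrier_vec nc"
    and le: "\<And>j. j < nc \<Longrightarrow> y $ j \<le> z $ j" and i: "i < nr"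
  shows "(M *\<^sub>v y) $ i \<le> (M *\<^sub>v z) $ i"
  unfolding mv_idx[OF M y i] mv_idx[OF M z i]
  using nn M i le unfolding nonneg_mat_def by (intro sum_mono mult_left_mono) auto

lemma W_mult: fixes B C :: "real mat"
  assumes B: "B \<in> carrier_mat n n" and C: "C \<in> carrier_mat n n" and u: "u \<in> carrier_vec n" and v: "v \<in> carrier_vec n"
  shows "four_block_mat B C (1\<^sub>m n) (0\<^sub>m n n) *\<^sub>v (u @\<^sub>v v) = (B *\<^sub>v u + C *\<^sub>v v) @\<^sub>v u"
proof -
  have z: "0\<^sub>m n n *\<^sub>v v = 0\<^sub>v n" by (intro eq_vecI) (use v in \<open>auto simp: scalar_prod_def\<close>)
  show ?thesis using four_block_mat_mult_vec[OF B C one_carrier_mat zero_carrier_mat u v] u v by (simp add: z)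
qed

lemma W_nonneg: fixes B C :: "real mat"
  assumes B: "B \<in> carrier_mat n n" and C: "C \<in> carrier_mat n n" and nB: "nonneg_mat B" and nC: "nonneg_mat C"
  shows "nonneg_mat (four_block_mat B C (1\<^sub>m n) (0\<^sub>m n n))"
  using B C nB nC unfolding nonneg_mat_def by auto



lemma mv_carrier[simp]: "A \<in> carrier_mat nr nc \<Longrightarrow> A *\<^sub>v v \<in> carrier_vec nr"
  unfolding carrier_vec_def by auto

theorem corollary3p12:
  fixes n :: nat and A P1 R1 S1 P2 R2 S2 P3 R3 S3 :: "real mat"
  assumes n: "0 < n"
    and mono: "A \<in> carrier_mat n n" "monotone_mat A"
    and sp1: "double_weak_regular_splitting n A P1 R1 S1"
    and sp2: "double_weak_regular_splitting n A P2 R2 S2"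
    and sp3: "double_regular_splitting n A P3 R3 S3"
    and spec1: "1 \<notin> rspectrum (S3 * minv P1)"
    and spec2: "1 \<notin> rspectrum (S3 * minv P2)"
    and Ahat1: "nonneg_mat (minv ((1\<^sub>m n - S3 * minv P1) * A))"
    and Ahat2: "nonneg_mat (minv ((1\<^sub>m n - S3 * minv P2) * A))"
    and cA: "mat_le (minv P3 * ((1\<^sub>m n - S3 * minv P2) * A)) (minv P3 * ((1\<^sub>m n - S3 * minv P1) * A))"
    and cR: "mat_le (minv P3 * (R3 - S3 * minv P2 * R2)) (minv P3 * (R3 - S3 * minv P1 * R1))"
  shows "rho (W_mat n P3 R3 S3 P1 R1 S1) \<le> rho (W_mat n P3 R3 S3 P2 R2 S2)
       \<and> rho (W_mat n P3 R3 S3 P2 R2 S2) < 1"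
proof -
  define e where "e = vec n (\<lambda>_. 1::real)"
  have ce: "e \<in> carrier_vec n" unfolding e_def by simp
  define B1 where "B1 = minv P3 * R3 - minv P3 * S3 * minv P1 * R1"
  define C1 where "C1 = minv P3 * S3 * minv P1 * S1"
  define B2 where "B2 = minv P3 * R3 - minv P3 * S3 * minv P2 * R2"
  define C2 where "C2 = minv P3 * S3 * minv P2 * S2"
  define W1 where "W1 = four_block_mat B1 C1 (1\<^sub>m n) (0\<^sub>m n n)"
  define W2 where "W2 = four_block_mat B2 C2 (1\<^sub>m n) (0\<^sub>m n n)"
  have W1eq: "W_mat n P3 R3 S3 P1 R1 S1 = W1" unfolding W_mat_def W1_def B1_def C1_def by simp
  have W2eq: "W_mat n P3 R3 S3 P2 R2 S2 = W2" unfolding W_mat_def W2_def B2_def C2_def by simp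
  note bf1 = block_facts[OF sp1 sp3, folded B1_def C1_def]
  note bf2 = block_facts[OF sp2 sp3, folded B2_def C2_def]
  have cB1: "B1 \<in> carrier_mat n n" and cC1: "C1 \<in> carrier_mat n n"
    and nB1: "nonneg_mat B1" and nC1: "nonneg_mat C1" using bf1 by auto
  have cB2: "B2 \<in> carrier_mat n n" and cC2: "C2 \<in> carrier_mat n n"
    and nB2: "nonneg_mat B2" and nC2: "nonneg_mat C2" using bf2 by auto
  have cW1: "W1 \<in> carrier_mat (n+n) (n+n)" unfolding W1_def by (rule four_block_carrier_mat[OF cB1 zero_carrier_mat])
  have cW2: "W2 \<in> carrier_mat (n+n) (n+n)" unfolding W2_def by (rule four_block_carrier_mat[OF cB2 zero_carrier_mat])
  have nW1: "nonneg_mat W1" unfolding W1_def by (rule W_nonneg[OF cB1 cC1 nB1 nC1])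
  have nW2: "nonneg_mat W2" unfolding W2_def by (rule W_nonneg[OF cB2 cC2 nB2 nC2])
  have nn: "n + n > 0" using n by simp
  have Ble: "B2 $$ (i,j) \<le> B1 $$ (i,j)" if "i < n" "j < n" for i j
    using cR unfolding bf1(6) bf2(6) mat_le_def using cB2 that by auto
  have BC: "B1 $$ (i,j) + C1 $$ (i,j) \<le> B2 $$ (i,j) + C2 $$ (i,j)" if i: "i < n" and j: "j < n" for i j
  proof -
    from cA have all: "\<forall>a<dim_row (1\<^sub>m n - B2 - C2). \<forall>b<dim_col (1\<^sub>m n - B2 - C2).
        (1\<^sub>m n - B2 - C2) $$ (a,b) \<le> (1\<^sub>m n - B1 - C1) $$ (a,b)"
      unfolding bf1(5) bf2(5) mat_le_def by blast
    have dims: "dim_row (1\<^sub>m n - B2 - C2) = n" "dim_col (1\<^sub>m n - B2 - C2) = n" using cC2 by auto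
    have "(1\<^sub>m n - B2 - C2) $$ (i,j) \<le> (1\<^sub>m n - B1 - C1) $$ (i,j)"
      by (rule all[rule_format]) (use dims i j in simp_all)
    then show ?thesis using cB1 cC1 cB2 cC2 i j by simp
  qed
  from sp3 have cP3: "P3 \<in> carrier_mat n n" and iP3: "invertible_mat P3" and nQ3: "nonneg_mat (minv P3)"
    and cS3: "S3 \<in> carrier_mat n n"
    unfolding double_regular_splitting_def double_splitting_def by auto
  from sp2 have cP2: "P2 \<in> carrier_mat n n" and iP2: "invertible_mat P2"
    unfolding double_weak_regular_splitting_def double_splitting_def by auto
  from minv_inv[OF cP3 iP3] have Q3P3: "minv P3 * P3 = 1\<^sub>m n" and cQ3: "minv P3 \<in> carrier_mat n n" by auto
  from minv_inv[OF cP2 iP2] have cQ2: "minv P2 \<in> carrier_mat n n" by auto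
  from mono(2) have iA: "invertible_mat A" unfolding monotone_mat_def by auto
  define H2 where "H2 = (1\<^sub>m n - S3 * minv P2) * A"
  have cH2: "H2 \<in> carrier_mat n n" unfolding H2_def
    by (rule mult_carrier_mat[OF minus_carrier_mat[OF mult_carrier_mat[OF cS3 cQ2]] mono(1)])
  have uH2: "H2 \<in> Units (ring_mat TYPE(real) n ())"
    unfolding H2_def by (rule Ahat_unit[OF mono(1) iA mult_carrier_mat[OF cS3 cQ2] spec2])
  from minv_unit[OF cH2 uH2] have H2i: "H2 * minv H2 = 1\<^sub>m n" "minv H2 * H2 = 1\<^sub>m n"
    and cH2i: "minv H2 \<in> carrier_mat n n" by auto
  define u where "u = minv H2 *\<^sub>v e"
  define d where "d = minv P3 *\<^sub>v e"
  have cu: "u \<in> carrier_vec n" and cd: "d \<in> carrier_vec n" unfolding u_def d_def using cH2i cQ3 by auto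
  have upos: "u $ i > 0" if "i < n" for i
    unfolding u_def e_def by (rule pos_rowsum[OF cH2i cH2 Ahat2[folded H2_def] H2i(2) that])
  have dpos: "d $ i > 0" if "i < n" for i
    unfolding d_def e_def by (rule pos_rowsum[OF cQ3 cP3 nQ3 Q3P3 that])
  have key: "(B2 *\<^sub>v u) $ i + (C2 *\<^sub>v u) $ i = u $ i - d $ i" if i: "i < n" for i
  proof -
    have "H2 *\<^sub>v u = e" unfolding u_def using cH2 cH2i ce
      by (simp add: assoc_mult_mat_vec[symmetric] H2i(1))
    then have "(minv P3 * H2) *\<^sub>v u = d" unfolding d_def using cQ3 cH2 cu by simp
    then have "(1\<^sub>m n - B2 - C2) *\<^sub>v u = d" using bf2(5) unfolding H2_def by simp
    moreover have "(1\<^sub>m n - B2 - C2) *\<^sub>v u = (1\<^sub>m n - B2) *\<^sub>v u - C2 *\<^sub>v u"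
      by (rule minus_mult_distrib_mat_vec[OF _ cC2 cu]) (use cB2 in simp)
    moreover have "(1\<^sub>m n - B2) *\<^sub>v u = u - B2 *\<^sub>v u"
      using minus_mult_distrib_mat_vec[OF one_carrier_mat cB2 cu] cu by simp
    ultimately have "d = (u - B2 *\<^sub>v u) - C2 *\<^sub>v u" by simp
    then have "d $ i = u $ i - (B2 *\<^sub>v u) $ i - (C2 *\<^sub>v u) $ i" using i cB2 cC2 cu by simp
    then show ?thesis by simp
  qed
  have rho2: "rho W2 < 1"
  proof (rule rho_lt[OF cW2 nn])
    fix \<mu> assume ev: "eigenvalue (map_mat complex_of_real W2) \<mu>"
    define x where "x = u @\<^sub>v u"
    have cx: "x \<in> carrier_vec (n+n)" unfolding x_def using cu by simp
    have xpos: "x $ i > 0" if "i < n + n" for i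
      unfolding x_def using cu upos that by (cases "i < n") auto
    define y where "y = B2 *\<^sub>v u + C2 *\<^sub>v u"
    have cy: "y \<in> carrier_vec n" unfolding y_def using cB2 cC2 by simp
    have yi: "y $ i = u $ i - d $ i" if "i < n" for i unfolding y_def using key[OF that] that cB2 cC2 by simp
    have W2x: "W2 *\<^sub>v x = y @\<^sub>v u" unfolding W2_def x_def y_def by (rule W_mult[OF cB2 cC2 cu cu])
    have W2W2x: "W2 *\<^sub>v (W2 *\<^sub>v x) = (B2 *\<^sub>v y + C2 *\<^sub>v u) @\<^sub>v y"
      unfolding W2x unfolding W2_def by (rule W_mult[OF cB2 cC2 cy cu])
    have pow2: "W2 ^\<^sub>m 2 = W2 * W2" using cW2 by (simp add: numeral_2_eq_2)
    have cW22: "W2 ^\<^sub>m 2 \<in> carrier_mat (n+n) (n+n)" using cW2 by simp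
    have lt: "((W2 ^\<^sub>m 2) *\<^sub>v x) $ i < x $ i" if i: "i < n + n" for i
    proof -
      have eq: "(W2 ^\<^sub>m 2) *\<^sub>v x = (B2 *\<^sub>v y + C2 *\<^sub>v u) @\<^sub>v y"
        unfolding pow2 using cW2 cx W2W2x by simp
      show ?thesis
      proof (cases "i < n")
        case True
        have "(B2 *\<^sub>v y) $ i \<le> (B2 *\<^sub>v u) $ i"
          by (rule mv_mono[OF cB2 nB2 cy cu _ True]) (use yi dpos in force)
        then have "((W2 ^\<^sub>m 2) *\<^sub>v x) $ i \<le> (B2 *\<^sub>v u) $ i + (C2 *\<^sub>v u) $ i"
          unfolding eq using True cB2 cC2 cy cu by simp
        also have "\<dots> < x $ i" using key[OF True] dpos[OF True] True cu unfolding x_def by simp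
        finally show ?thesis .
      next
        case False
        then have "((W2 ^\<^sub>m 2) *\<^sub>v x) $ i = y $ (i - n)" unfolding eq using i cB2 cC2 cy cu by simp
        also have "\<dots> < x $ i" using yi[of "i - n"] dpos[of "i - n"] False i cu unfolding x_def by simp
        finally show ?thesis .
      qed
    qed
    let ?Mc = "map_mat complex_of_real W2"
    have cMc: "?Mc \<in> carrier_mat (n+n) (n+n)" using cW2 by simp
    from ev obtain v where v: "eigenvector ?Mc v \<mu>" unfolding eigenvalue_def by auto
    have "?Mc ^\<^sub>m 2 *\<^sub>v v = \<mu> ^ 2 \<cdot>\<^sub>v v" by (rule eigenvector_pow[OF cMc v])
    moreover have "map_mat complex_of_real (W2 ^\<^sub>m 2) = ?Mc ^\<^sub>m 2" by (rule of_real_hom.mat_hom_pow[OF cW2])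
    ultimately have "eigenvalue (map_mat complex_of_real (W2 ^\<^sub>m 2)) (\<mu> ^ 2)"
      using v cW2 unfolding eigenvalue_def eigenvector_def by auto
    from ev_bound_strict[OF cW22 nonneg_pow[OF cW2 nW2] cx xpos lt this]
    have "norm \<mu> ^ 2 < 1" by (simp add: norm_power)
    then show "norm \<mu> < 1" by (metis norm_ge_zero one_le_power not_less)
  qed
  have r0: "rho W2 \<ge> 0" by (rule rho_nonneg[OF cW2 nn])
  have "rho W1 \<le> rho W2"
  proof (rule ccontr)
    assume "\<not> ?thesis"
    then have gt: "rho W1 > rho W2" by simp
    define \<beta> where "\<beta> = (rho W2 + min (rho W1) 1) / 2"
    have \<beta>: "rho W2 < \<beta>" "\<beta> < 1" "\<beta> < rho W1" "0 < \<beta>" using gt rho2 r0 unfolding \<beta>_def by auto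
    from resolvent[OF cW2 nn nW2 \<beta>(1)] obtain x where cx: "x \<in> carrier_vec (n+n)"
      and xpos: "\<And>i. i < n + n \<Longrightarrow> x $ i > 0" and xle: "\<And>i. i < n + n \<Longrightarrow> (W2 *\<^sub>v x) $ i \<le> \<beta> * x $ i" by auto
    define u' where "u' = vec n (\<lambda>i. x $ i)"
    define v' where "v' = vec n (\<lambda>i. x $ (n + i))"
    have cu': "u' \<in> carrier_vec n" and cv': "v' \<in> carrier_vec n" unfolding u'_def v'_def by auto
    have xeq: "x = u' @\<^sub>v v'"
      by (rule eq_vecI) (use cx in \<open>auto simp: u'_def v'_def\<close>)
    have W2x: "W2 *\<^sub>v x = (B2 *\<^sub>v u' + C2 *\<^sub>v v') @\<^sub>v u'" unfolding xeq W2_def by (rule W_mult[OF cB2 cC2 cu' cv'])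
    have h1: "(B2 *\<^sub>v u') $ i + (C2 *\<^sub>v v') $ i \<le> \<beta> * u' $ i" if i: "i < n" for i
      using xle[of i] i unfolding W2x using cB2 cC2 cu' cv' by (simp add: u'_def)
    have h2: "u' $ i \<le> \<beta> * v' $ i" if i: "i < n" for i
      using xle[of "n + i"] i unfolding W2x using cB2 cC2 cu' cv' by (simp add: u'_def v'_def)
    have u'pos: "u' $ i > 0" if "i < n" for i using xpos[of i] that unfolding u'_def by simp
    define z where "z = vec n (\<lambda>i. u' $ i / \<beta>)"
    have cz: "z \<in> carrier_vec n" unfolding z_def by simp
    have zle: "z $ i \<le> v' $ i" if "i < n" for i
      using h2[OF that] \<beta>(4) that unfolding z_def by (simp add: divide_le_eq mult.commute)
    have zpos: "z $ i > 0" if "i < n" for i using u'pos[OF that] \<beta>(4) that unfolding z_def by simp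
    define x' where "x' = u' @\<^sub>v z"
    have cx': "x' \<in> carrier_vec (n+n)" unfolding x'_def using cu' cz by simp
    have x'pos: "x' $ i > 0" if "i < n + n" for i
      unfolding x'_def using cu' cz u'pos zpos that by (cases "i < n") auto
    have W1x': "W1 *\<^sub>v x' = (B1 *\<^sub>v u' + C1 *\<^sub>v z) @\<^sub>v u'" unfolding x'_def W1_def by (rule W_mult[OF cB1 cC1 cu' cz])
    have cmp: "(B1 *\<^sub>v u') $ i + (C1 *\<^sub>v z) $ i \<le> (B2 *\<^sub>v u') $ i + (C2 *\<^sub>v z) $ i" if i: "i < n" for i
    proof -
      have "(B1 *\<^sub>v u') $ i + (C1 *\<^sub>v z) $ i = (\<Sum>j\<in>{0..<n}. B1 $$ (i,j) * u' $ j + C1 $$ (i,j) * z $ j)"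
        unfolding mv_idx[OF cB1 cu' i] mv_idx[OF cC1 cz i] sum.distrib ..
      also have "\<dots> \<le> (\<Sum>j\<in>{0..<n}. B2 $$ (i,j) * u' $ j + C2 $$ (i,j) * z $ j)"
      proof (rule sum_mono)
        fix j assume "j \<in> {0..<n}"
        then have j: "j < n" by simp
        have t: "u' $ j = \<beta> * z $ j" unfolding z_def using j \<beta>(4) by simp
        have "(1 - \<beta>) * B2 $$ (i,j) \<le> (1 - \<beta>) * B1 $$ (i,j)" using Ble[OF i j] \<beta>(2) by (intro mult_left_mono) auto
        then have "\<beta> * B1 $$ (i,j) + C1 $$ (i,j) \<le> \<beta> * B2 $$ (i,j) + C2 $$ (i,j)" using BC[OF i j] by (simp add: algebra_simps)
        then have "(\<beta> * B1 $$ (i,j) + C1 $$ (i,j)) * z $ j \<le> (\<beta> * B2 $$ (i,j) + C2 $$ (i,j)) * z $ j"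
          using zpos[OF j] by (intro mult_right_mono) auto
        then show "B1 $$ (i,j) * u' $ j + C1 $$ (i,j) * z $ j \<le> B2 $$ (i,j) * u' $ j + C2 $$ (i,j) * z $ j"
          unfolding t by (simp add: algebra_simps)
      qed
      also have "\<dots> = (B2 *\<^sub>v u') $ i + (C2 *\<^sub>v z) $ i"
        unfolding mv_idx[OF cB2 cu' i] mv_idx[OF cC2 cz i] sum.distrib ..
      finally show ?thesis .
    qed
    have "norm \<mu> \<le> \<beta>" if ev: "eigenvalue (map_mat complex_of_real W1) \<mu>" for \<mu>
    proof (rule ev_bound[OF cW1 nW1 cx' x'pos _ ev])
      fix i assume i: "i < n + n"
      show "(W1 *\<^sub>v x') $ i \<le> \<beta> * x' $ i"
      proof (cases "i < n")
        case True
        have "(W1 *\<^sub>v x') $ i = (B1 *\<^sub>v u') $ i + (C1 *\<^sub>v z) $ i" unfolding W1x' using True cB1 cC1 cu' cz by simp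
        also have "\<dots> \<le> (B2 *\<^sub>v u') $ i + (C2 *\<^sub>v z) $ i" by (rule cmp[OF True])
        also have "\<dots> \<le> (B2 *\<^sub>v u') $ i + (C2 *\<^sub>v v') $ i"
          using mv_mono[OF cC2 nC2 cz cv' zle True] by simp
        also have "\<dots> \<le> \<beta> * u' $ i" by (rule h1[OF True])
        also have "\<dots> = \<beta> * x' $ i" unfolding x'_def using True cu' cz by simp
        finally show ?thesis .
      next
        case False
        have "(W1 *\<^sub>v x') $ i = u' $ (i - n)" unfolding W1x' using False i cB1 cC1 cu' cz by simp
        also have "\<dots> = \<beta> * z $ (i - n)" unfolding z_def using False i \<beta>(4) by simp
        also have "\<dots> = \<beta> * x' $ i" unfolding x'_def using False i cu' cz by simp
        finally show ?thesis by simp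
      qed
    qed
    then have "rho W1 \<le> \<beta>" by (intro rho_le[OF cW1 nn]) auto
    with \<beta>(3) show False by simp
  qed
  then show ?thesis unfolding W1eq W2eq using rho2 by simp
qed


end
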